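(* Let $\Sigma$ be an $n$-simplex in an $n$-dimensional real normed linear space $X$. Then $\mathsf{relint}(\Sigma)$ is the interior of $\Sigma$.
   Context: The setting is Bishop's constructive mathematics (intuitionistic logic). Vectors $v_1,\ldots,v_n$ are linearly independent if $\|\sum_i\lambda_iv_i\|>0$ whenever $\sum_i|\lambda_i|>0$; points $a_1,\ldots,a_{n+1}$ are affinely independent if $a_k-a_{n+1}$ ($1\le k\le n$) are linearly independent; an $n$-simplex is the convex hull of $n+1$ affinely independent points. $\mathsf{aff}(S)$ is the set of affine combinations of elements of $S$, $B_X(x,r)$ the open ball, and $\mathsf{relint}(S)=\{x\in S:\exists r>0\,(B_X(x,r)\cap\mathsf{aff}(S)\subset S)\}$. The interior of $S$ is $\{x\in S:\exists r>0\,(B_X(x,r)\subset S)\}$. *)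

theory Defs
  imports "HOL-Analysis.Analysis"
begin

definition aff_indep_pts :: "nat \<Rightarrow> (nat \<Rightarrow> 'a::real_vector) \<Rightarrow> bool" where
  "aff_indep_pts n a \<longleftrightarrow>
     inj_on (\<lambda>k. a k - a n) {..<n} \<and> independent ((\<lambda>k. a k - a n) ` {..<n})"

definition is_simplex :: "nat \<Rightarrow> 'a::real_vector set \<Rightarrow> bool" where
  "is_simplex n S \<longleftrightarrow> (\<exists>a. aff_indep_pts n a \<and> S = convex hull (a ` {..n}))"

definition relint :: "'a::real_normed_vector set \<Rightarrow> 'a set" where
  "relint S = {x \<in> S. \<exists>r>0. ball x r \<inter> affine hull S \<subseteq> S}"

definition has_dimension :: "'a::real_vector itself \<Rightarrow> nat \<Rightarrow> bool" where
  "has_dimension TYPE('a) n \<longleftrightarrow>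
     (\<exists>B::'a set. finite B \<and> card B = n \<and> independent B \<and> span B = UNIV)"

end

theory Submission
  imports Defs
begin

lemma span_full:
  fixes S B :: "'a::real_vector set"
  assumes "finite B" "card B = n" "span B = UNIV" "independent S" "finite S" "card S = n"
  shows "span S = UNIV"
proof (rule ccontr)
  assume "span S \<noteq> UNIV"
  then obtain x where x: "x \<notin> span S" by blast
  have ind: "independent (insert x S)" using assms(4) x by (simp add: independent_insert)
  have "finite (insert x S) \<and> card (insert x S) \<le> card B"
    by (rule independent_span_bound[OF assms(1) ind]) (simp add: assms(3))
  moreover have "card (insert x S) = Suc n" proof -
    have "x \<notin> S" using x span_base by blast
    then show ?thesis using assms(5,6) by simp
  qed
  ultimately show False using assms(2) by simp
qed

theorem proposition21:
  fixes \<Sigma> :: "'a::real_normed_vector set" and n :: nat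
  assumes "has_dimension TYPE('a) n"
    and "is_simplex n \<Sigma>"
  shows "relint \<Sigma> = interior \<Sigma>"
proof -
  obtain B :: "'a set" where B: "finite B" "card B = n" "independent B" "span B = UNIV"
    using assms(1) unfolding has_dimension_def by blast
  obtain a where a: "aff_indep_pts n a" and S: "\<Sigma> = convex hull (a ` {..n})"
    using assms(2) unfolding is_simplex_def by blast
  let ?S = "(\<lambda>k. a k - a n) ` {..<n}"
  have inj: "inj_on (\<lambda>k. a k - a n) {..<n}" and ind: "independent ?S"
    using a unfolding aff_indep_pts_def by auto
  have cS: "card ?S = n" using card_image[OF inj] by simp
  have sp: "span ?S = UNIV" by (rule span_full[OF B(1,2,4) ind]) (auto simp: cS)
  have eq: "a ` {..n} = insert (a n) (a ` {..<n})" 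
  proof -
    have "{..n} = insert n {..<n}" by auto
    then show ?thesis by simp
  qed
  have "(\<lambda>x. - a n + x) ` (a ` {..<n}) = ?S" by (auto simp: image_image)
  then have "affine hull (a ` {..n}) = (\<lambda>x. a n + x) ` UNIV"
    unfolding eq affine_hull_insert_span_gen using sp by simp
  also have "\<dots> = UNIV"
  proof (rule surjI)
    fix y show "a n + (y - a n) = y" by simp
  qed
  finally have aff: "affine hull \<Sigma> = UNIV" using S by simp
  show ?thesis unfolding relint_def aff
  proof (intro set_eqI iffI)
    fix x assume "x \<in> {x \<in> \<Sigma>. \<exists>r>0. ball x r \<inter> UNIV \<subseteq> \<Sigma>}"
    then show "x \<in> interior \<Sigma>" by (auto simp: mem_interior)
  next
    fix x assume "x \<in> interior \<Sigma>"
    then show "x \<in> {x \<in> \<Sigma>. \<exists>r>0. ball x r \<inter> UNIV \<subseteq> \<Sigma>}"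
      using interior_subset by (auto simp: mem_interior)
  qed
qed

end
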